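(* Let $\Lambda$ be a $\sigma$-finite measure on $\mathcal Y\subseteq\mathbb R$, let $\gamma\in\mathbb R\setminus\{0,-1\}$, let $Q_1,\dots,Q_k$ be probability measures on $\mathcal Y$ mutually absolutely continuous with $\Lambda$ with densities $q_j=\mathrm dQ_j/\mathrm d\Lambda$, and let $w_1,\dots,w_k>0$. Suppose that $p^{\rm opt}(y)=z_w\big\{\sum_{j=1}^k w_j q_j(y)^\gamma\big\}^{1/\gamma}$, with $z_w>0$ the constant making $\int p^{\rm opt}\mathrm d\Lambda=1$, is well defined, and let $P^{\rm opt}$ be the probability measure with density $p^{\rm opt}$. Define, for probability measures $P$ mutually absolutely continuous with $\Lambda$ (with all integrals below finite), $$A(P)=\sum_{j=1}^k w_j D^*_\gamma(P,Q_j;\Lambda),\qquad D^*_\gamma(P,Q;\Lambda)=-\frac1\gamma\frac{\int p\,q^\gamma\,\mathrm d\Lambda}{\big(\int p^{\gamma+1}\mathrm d\Lambda\big)^{1/(\gamma+1)}}+\frac1\gamma\Big(\int q^{\gamma+1}\mathrm d\Lambda\Big)^{\gamma/(\gamma+1)},$$ where $p=\mathrm dP/\mathrm d\Lambda$, $q=\mathrm dQ/\mathrm d\Lambda$. Then $P^{\rm opt}$ is the unique minimizer of $A$: $A(P)\ge A(P^{\rm opt})$ for all such $P$, with equality if and only if $P=P^{\rm opt}$.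
   Context: $D^*_\gamma$ is called the dual $\gamma$-divergence. All measures considered are probability measures on $\mathcal Y$ mutually absolutely continuous with $\Lambda$, and all integrals appearing are assumed finite. *)

theory Defs
  imports "HOL-Probability.Probability"
begin

definition mac_prob :: "real measure \<Rightarrow> real measure \<Rightarrow> bool" where
  "mac_prob L P \<longleftrightarrow> prob_space P \<and> sets P = sets L \<and>
     absolutely_continuous L P \<and> absolutely_continuous P L"

definition dens :: "real measure \<Rightarrow> real measure \<Rightarrow> real \<Rightarrow> real" where
  "dens L P = (\<lambda>y. enn2real (RN_deriv L P y))"

definition dual_gamma_div ::
  "real measure \<Rightarrow> real \<Rightarrow> (real \<Rightarrow> real) \<Rightarrow> (real \<Rightarrow> real) \<Rightarrow> real" where
  "dual_gamma_div L \<gamma> p q =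
     - (1 / \<gamma>) * (\<integral>y. p y * q y powr \<gamma> \<partial>L)
         / (\<integral>y. p y powr (\<gamma> + 1) \<partial>L) powr (1 / (\<gamma> + 1))
     + (1 / \<gamma>) * (\<integral>y. q y powr (\<gamma> + 1) \<partial>L) powr (\<gamma> / (\<gamma> + 1))"

definition A_obj ::
  "real measure \<Rightarrow> real \<Rightarrow> nat \<Rightarrow> (nat \<Rightarrow> real) \<Rightarrow> (nat \<Rightarrow> real measure) \<Rightarrow> real measure \<Rightarrow> real" where
  "A_obj L \<gamma> k w Q P = (\<Sum>j\<in>{1..k}. w j * dual_gamma_div L \<gamma> (dens L P) (dens L (Q j)))"

definition admissible ::
  "real measure \<Rightarrow> real \<Rightarrow> nat \<Rightarrow> (nat \<Rightarrow> real measure) \<Rightarrow> real measure \<Rightarrow> bool" where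
  "admissible L \<gamma> k Q P \<longleftrightarrow> mac_prob L P \<and>
     integrable L (\<lambda>y. dens L P y powr (\<gamma> + 1)) \<and>
     (\<forall>j\<in>{1..k}. integrable L (\<lambda>y. dens L P y * dens L (Q j) y powr \<gamma>))"

end

theory Submission
  imports Defs
begin

lemma bern_strict:
  fixes t r :: real
  assumes t: "t > 0" "t \<noteq> 1" and r: "r \<noteq> 0" "r \<noteq> 1"
  shows "r * (r - 1) * (t powr r - 1 - r * (t - 1)) > 0"
proof -
  define g where "g = (\<lambda>x::real. x powr r - 1 - r * (x - 1))"
  have D: "\<And>x. x > 0 \<Longrightarrow> (g has_real_derivative (r * x powr (r - 1) - r)) (at x)"
    unfolding g_def
    by (auto intro!: derivative_eq_intros)
  have g1: "g 1 = 0" by (simp add: g_def)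
  have key: "(r - 1) * (x powr (r - 1) - 1) * (x - 1) > 0" if "x > 0" "x \<noteq> 1" for x
  proof -
    have e: "x powr (r - 1) - 1 = exp ((r - 1) * ln x) - 1" using that by (simp add: powr_def)
    have "(r - 1) * (exp ((r - 1) * ln x) - 1) * (x - 1) > 0"
    proof (cases "x > 1")
      case True
      then have "ln x > 0" by simp
      then show ?thesis using True r
        by (cases "r > 1") (auto intro!: mult_pos_pos mult_neg_neg simp: zero_less_mult_iff mult_less_0_iff)
    next
      case False
      then have "ln x < 0" "x < 1" using that by auto
      then show ?thesis using r
        by (cases "r > 1") (auto intro!: mult_pos_pos mult_neg_neg simp: zero_less_mult_iff mult_less_0_iff)
    qed
    then show ?thesis using e by simp
  qed
  have r2: "r * r > 0" using r(1) not_real_square_gt_zero by blast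
  show ?thesis
  proof (cases "t > 1")
    case True
    obtain c where c: "1 < c" "c < t" "g t - g 1 = (t - 1) * (r * c powr (r - 1) - r)"
      using MVT2[of 1 t g "\<lambda>x. r * x powr (r - 1) - r"] True D by auto
    have k: "(r - 1) * (c powr (r - 1) - 1) * (c - 1) > 0" using key[of c] c by auto
    then have "(r - 1) * (c powr (r - 1) - 1) > 0" using c
      by (simp add: zero_less_mult_iff)
    then have "(r * r) * ((r - 1) * (c powr (r - 1) - 1) * (t - 1)) > 0" using True r2 by simp
    moreover have "r * (r - 1) * g t = (r * r) * ((r - 1) * (c powr (r - 1) - 1) * (t - 1))"
    proof -
      have gt: "g t = (t - 1) * (r * c powr (r - 1) - r)" using c(3) g1 by simp
      show ?thesis unfolding gt by (simp add: algebra_simps)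
    qed
    ultimately have "0 < r * (r - 1) * g t" by linarith
    then show ?thesis by (simp only: g_def)
  next
    case False
    then have t1: "t < 1" using t by simp
    obtain c where c: "t < c" "c < 1" "g 1 - g t = (1 - t) * (r * c powr (r - 1) - r)"
      using MVT2[of t 1 g "\<lambda>x. r * x powr (r - 1) - r"] t1 t D by auto
    have k: "(r - 1) * (c powr (r - 1) - 1) * (c - 1) > 0" using key[of c] c t by auto
    then have "(r - 1) * (c powr (r - 1) - 1) < 0" using c
      by (simp add: zero_less_mult_iff)
    then have "(r * r) * ((r - 1) * (c powr (r - 1) - 1) * (t - 1)) > 0" using t1 r2
      by (simp add: zero_less_mult_iff)
    moreover have "r * (r - 1) * g t = (r * r) * ((r - 1) * (c powr (r - 1) - 1) * (t - 1))"
    proof -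
      have gt: "g t = - ((1 - t) * (r * c powr (r - 1) - r))" using c(3) g1 by simp
      show ?thesis unfolding gt by (simp add: algebra_simps)
    qed
    ultimately have "0 < r * (r - 1) * g t" by linarith
    then show ?thesis by (simp only: g_def)
  qed
qed

lemma pw_strict:
  fixes a b g :: real
  assumes a: "a > 0" and b: "b > 0" and g: "g \<noteq> 0" "g \<noteq> -1" and ab: "a \<noteq> b"
  shows "g * (a * b powr g - b powr (g + 1) - (a powr (g + 1) - b powr (g + 1)) / (g + 1)) < 0"
proof -
  define r where "r = g + 1"
  define t where "t = a / b"
  have t: "t > 0" "t \<noteq> 1" using a b ab by (auto simp: t_def)
  have at: "a = t * b" using b by (simp add: t_def)
  define B where "B = b powr r"
  define T where "T = t powr r"
  have B: "B > 0" using b by (simp add: B_def)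
  have r: "r \<noteq> 0" "r \<noteq> 1" using g by (auto simp: r_def)
  have e1: "a * b powr g = t * B"
    using b by (simp add: at B_def r_def powr_add)
  have e2: "a powr r = T * B"
    using b t by (simp add: at B_def T_def powr_mult)
  have E: "(g * (a * b powr g - B - (a powr r - B) / r)) * (r * r)
      = - B * (r * (r - 1) * (T - 1 - r * (t - 1)))"
    unfolding e1 e2 using r by (simp add: r_def field_simps)
  have "r * (r - 1) * (T - 1 - r * (t - 1)) > 0" unfolding T_def by (rule bern_strict[OF t r])
  then have "(g * (a * b powr g - B - (a powr r - B) / r)) * (r * r) < 0"
    unfolding E using B by (simp add: mult_pos_pos)
  moreover have "r * r > 0" using r(1) not_real_square_gt_zero by blast
  ultimately have "g * (a * b powr g - B - (a powr r - B) / r) < 0"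
    by (simp add: mult_less_0_iff)
  then show ?thesis by (simp add: B_def r_def)
qed

lemma pw_eq:
  fixes b g :: real
  assumes b: "b > 0"
  shows "g * (b * b powr g - b powr (g + 1) - (b powr (g + 1) - b powr (g + 1)) / (g + 1)) = 0"
  using b by (simp add: powr_add)

lemma mac_facts:
  assumes sf: "sigma_finite_measure L" and m: "mac_prob L P"
  shows "P = density L (\<lambda>y. ennreal (dens L P y))"
    and "AE y in L. dens L P y > 0"
    and "dens L P \<in> borel_measurable L"
    and "integrable L (dens L P)"
    and "(\<integral>y. dens L P y \<partial>L) = 1"
proof -
  interpret sigma_finite_measure L by fact
  have pP: "prob_space P" and sP: "sets P = sets L" and ac1: "absolutely_continuous L P"
    and ac2: "absolutely_continuous P L" using m by (auto simp: mac_prob_def)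
  interpret P: prob_space P by fact
  have sfP: "sigma_finite_measure P" by unfold_locales
  have fin: "AE y in L. RN_deriv L P y \<noteq> \<infinity>"
    by (rule RN_deriv_finite[OF sfP ac1 sP])
  have dP: "density L (RN_deriv L P) = P" by (rule density_RN_deriv[OF ac1 sP])
  show meas: "dens L P \<in> borel_measurable L" unfolding dens_def by measurable
  have "density L (\<lambda>y. ennreal (dens L P y)) = density L (RN_deriv L P)"
    apply (rule density_cong)
    using meas apply measurable
    using fin by eventually_elim (auto simp: dens_def less_top)
  then show "P = density L (\<lambda>y. ennreal (dens L P y))" using dP by simp
  have "AE x in density L (RN_deriv L P). 0 < RN_deriv L P x"
    by (subst AE_density) auto
  then have "AE x in P. 0 < RN_deriv L P x" unfolding dP .
  then have "AE x in L. 0 < RN_deriv L P x"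
    by (rule absolutely_continuous_AE[OF sP[symmetric] ac2])
  then show "AE y in L. dens L P y > 0" using fin
    by eventually_elim (auto simp: dens_def enn2real_positive_iff less_top)
  have "integrable P (\<lambda>_. 1::real)" by simp
  then show "integrable L (dens L P)"
    using RN_deriv_integrable[OF sfP ac1 sP, of "\<lambda>_. 1"] by (simp add: dens_def)
  have "integral\<^sup>L P (\<lambda>_. 1::real) = 1" by (simp add: P.prob_space)
  then show "(\<integral>y. dens L P y \<partial>L) = 1"
    using RN_deriv_integral[OF sfP ac1 sP, of "\<lambda>_. 1"] by (simp add: dens_def)
qed

lemma core:
  fixes L :: "real measure" and p v :: "real \<Rightarrow> real" and g :: real
  assumes g: "g \<noteq> 0" "g \<noteq> -1"
    and pm[measurable]: "p \<in> borel_measurable L" and vm[measurable]: "v \<in> borel_measurable L"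
    and pp: "AE y in L. p y > 0" and vp: "AE y in L. v y > 0"
    and ip: "integrable L (\<lambda>y. p y powr (g + 1))"
    and iv: "integrable L (\<lambda>y. v y powr (g + 1))"
    and ipv: "integrable L (\<lambda>y. p y * v y powr g)"
    and Ip: "(\<integral>y. p y powr (g + 1) \<partial>L) > 0"
    and Iv: "(\<integral>y. v y powr (g + 1) \<partial>L) > 0"
  shows "g * ((\<integral>y. p y * v y powr g \<partial>L) / (\<integral>y. p y powr (g + 1) \<partial>L) powr (1 / (g + 1))
            - (\<integral>y. v y powr (g + 1) \<partial>L) / (\<integral>y. v y powr (g + 1) \<partial>L) powr (1 / (g + 1))) \<le> 0"
    and "g * ((\<integral>y. p y * v y powr g \<partial>L) / (\<integral>y. p y powr (g + 1) \<partial>L) powr (1 / (g + 1))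
            - (\<integral>y. v y powr (g + 1) \<partial>L) / (\<integral>y. v y powr (g + 1) \<partial>L) powr (1 / (g + 1))) = 0
         \<Longrightarrow> AE y in L. p y = ((\<integral>y. p y powr (g + 1) \<partial>L) powr (1 / (g + 1))
                  / (\<integral>y. v y powr (g + 1) \<partial>L) powr (1 / (g + 1))) * v y"
proof -
  define r where "r = g + 1"
  have r0: "r \<noteq> 0" using g by (simp add: r_def)
  define IP where "IP = (\<integral>y. p y powr r \<partial>L)"
  define IV where "IV = (\<integral>y. v y powr r \<partial>L)"
  define J where "J = (\<integral>y. p y * v y powr g \<partial>L)"
  define Np where "Np = IP powr (1 / r)"
  define Nv where "Nv = IV powr (1 / r)"
  have IP: "IP > 0" and IV: "IV > 0" using Ip Iv by (simp_all add: IP_def IV_def r_def)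
  have Np: "Np > 0" and Nv: "Nv > 0" using IP IV by (simp_all add: Np_def Nv_def)
  have Npr: "Np powr r = IP" using IP r0 by (simp add: Np_def powr_powr)
  have Nvr: "Nv powr r = IV" using IV r0 by (simp add: Nv_def powr_powr)
  have Nvg: "IV / Nv = Nv powr g"
    using Nv Nvr[symmetric] by (simp add: r_def powr_add)
  define c1 where "c1 = 1 / (Np * Nv powr g)"
  define G where "G = (\<lambda>y. g * ((p y / Np) * (v y / Nv) powr g - (v y / Nv) powr r
        - ((p y / Np) powr r - (v y / Nv) powr r) / r))"
  define H where "H = (\<lambda>y. g * (c1 * (p y * v y powr g) - v y powr r / IV
        - (p y powr r / IP - v y powr r / IV) / r))"
  have GH: "AE y in L. G y = H y"
    using pp vp
    by eventually_elim (simp add: G_def H_def c1_def powr_divide Npr Nvr)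
  have Gle: "AE y in L. G y \<le> 0"
    using pp vp
  proof eventually_elim
    case (elim y)
    have a: "p y / Np > 0" and b: "v y / Nv > 0" using elim Np Nv by auto
    show ?case
    proof (cases "p y / Np = v y / Nv")
      case True
      have "G y = g * ((v y / Nv) * (v y / Nv) powr g - (v y / Nv) powr (g + 1)
        - ((v y / Nv) powr (g + 1) - (v y / Nv) powr (g + 1)) / (g + 1))"
        unfolding G_def r_def True ..
      then show ?thesis using pw_eq[OF b, of g] g(1) by auto
    next
      case False
      then show ?thesis using pw_strict[OF a b g False] by (simp add: G_def r_def)
    qed
  qed
  have Hint: "integrable L H"
    unfolding H_def using ip iv ipv by (simp add: r_def)
  have intH: "integral\<^sup>L L H = g * (c1 * J - 1)"
    unfolding H_def using ip iv ipv IP IV r0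
    by (simp add: r_def J_def IP_def IV_def)
  have HG: "integral\<^sup>L L H = integral\<^sup>L L G"
  proof (rule integral_cong_AE)
    show "H \<in> borel_measurable L" unfolding H_def by measurable
    show "G \<in> borel_measurable L" unfolding G_def by measurable
    show "AE x in L. H x = G x" using GH by eventually_elim simp
  qed
  have "0 \<le> integral\<^sup>L L (\<lambda>y. - H y)"
    by (rule integral_nonneg_AE) (use Gle GH in \<open>eventually_elim, auto\<close>)
  then have Hle: "integral\<^sup>L L H \<le> 0" by simp
  have rel: "g * (J / Np - IV / Nv) = Nv powr g * integral\<^sup>L L H"
    unfolding intH Nvg c1_def using Np Nv by (simp add: field_simps)
  have Nvg0: "Nv powr g > 0" using Nv by simp
  show "g * ((\<integral>y. p y * v y powr g \<partial>L) / (\<integral>y. p y powr (g + 1) \<partial>L) powr (1 / (g + 1))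
            - (\<integral>y. v y powr (g + 1) \<partial>L) / (\<integral>y. v y powr (g + 1) \<partial>L) powr (1 / (g + 1))) \<le> 0"
    using rel Hle Nvg0 unfolding J_def Np_def Nv_def IP_def IV_def r_def
    by (simp add: mult_nonneg_nonpos)
  assume eq0: "g * ((\<integral>y. p y * v y powr g \<partial>L) / (\<integral>y. p y powr (g + 1) \<partial>L) powr (1 / (g + 1))
            - (\<integral>y. v y powr (g + 1) \<partial>L) / (\<integral>y. v y powr (g + 1) \<partial>L) powr (1 / (g + 1))) = 0"
  then have "integral\<^sup>L L H = 0" using rel Nvg0 unfolding J_def Np_def Nv_def IP_def IV_def r_def
    by simp
  then have "integral\<^sup>L L (\<lambda>y. - H y) = 0" by simp
  then have "AE y in L. - H y = 0"
    by (subst integral_nonneg_eq_0_iff_AE[symmetric]) (use Hint Gle GH in \<open>auto elim: AE_mp\<close>)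
  then show "AE y in L. p y = ((\<integral>y. p y powr (g + 1) \<partial>L) powr (1 / (g + 1))
                  / (\<integral>y. v y powr (g + 1) \<partial>L) powr (1 / (g + 1))) * v y"
    using GH pp vp
  proof eventually_elim
    case (elim y)
    have a: "p y / Np > 0" and b: "v y / Nv > 0" using elim Np Nv by auto
    have "G y = 0" using elim by simp
    have "p y / Np = v y / Nv"
    proof (rule ccontr)
      assume ne: "p y / Np \<noteq> v y / Nv"
      have "G y < 0" using pw_strict[OF a b g ne] by (simp add: G_def r_def)
      then show False using \<open>G y = 0\<close> by simp
    qed
    then have "p y = (Np / Nv) * v y" using Np Nv by (simp add: field_simps)
    then show ?case by (simp add: Np_def Nv_def IP_def IV_def r_def)
  qed
qed

lemma int_pos:
  fixes L :: "real measure" and f d :: "real \<Rightarrow> real"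
  assumes fi: "integrable L f" and fp: "AE y in L. f y > 0"
    and dm: "d \<in> borel_measurable L" and d1: "(\<integral>y. d y \<partial>L) = 1"
  shows "(\<integral>y. f y \<partial>L) > 0"
proof -
  have ge: "(\<integral>y. f y \<partial>L) \<ge> 0" by (rule integral_nonneg_AE) (use fp in \<open>eventually_elim, auto\<close>)
  show ?thesis
  proof (rule ccontr)
    assume "\<not> ?thesis"
    then have "(\<integral>y. f y \<partial>L) = 0" using ge by simp
    then have "AE y in L. f y = 0"
    proof -
      have "AE y in L. 0 \<le> f y" using fp by eventually_elim auto
      then show ?thesis using integral_nonneg_eq_0_iff_AE[OF fi] \<open>(\<integral>y. f y \<partial>L) = 0\<close> by simp
    qed
    then have F: "AE y in L. False" using fp by eventually_elim auto
    have "(\<integral>y. d y \<partial>L) = (\<integral>y. 0 \<partial>L)"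
      by (rule integral_cong_AE) (use dm F in \<open>auto elim: AE_mp\<close>)
    then show False using d1 by simp
  qed
qed

theorem mainTheorem2:
  fixes L :: "real measure" and \<gamma> :: real and k :: nat
    and Q :: "nat \<Rightarrow> real measure" and w :: "nat \<Rightarrow> real"
    and z :: real and popt :: "real \<Rightarrow> real" and Popt :: "real measure"
  assumes sf: "sigma_finite_measure L"
    and g0: "\<gamma> \<noteq> 0" and g1: "\<gamma> \<noteq> -1"
    and Q: "\<And>j. j \<in> {1..k} \<Longrightarrow> mac_prob L (Q j)"
    and Qint: "\<And>j. j \<in> {1..k} \<Longrightarrow> integrable L (\<lambda>y. dens L (Q j) y powr (\<gamma> + 1))"
    and w: "\<And>j. j \<in> {1..k} \<Longrightarrow> w j > 0"
    and popt_def: "popt = (\<lambda>y. z * (\<Sum>j\<in>{1..k}. w j * dens L (Q j) y powr \<gamma>) powr (1 / \<gamma>))"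
    and z: "z > 0"
    and popt_int: "integrable L popt"
    and popt_norm: "(\<integral>y. popt y \<partial>L) = 1"
    and Popt_def: "Popt = density L (\<lambda>y. ennreal (popt y))"
    and Popt_adm: "admissible L \<gamma> k Q Popt"
  shows "(\<forall>P. admissible L \<gamma> k Q P \<longrightarrow> A_obj L \<gamma> k w Q P \<ge> A_obj L \<gamma> k w Q Popt)
       \<and> (\<forall>P. admissible L \<gamma> k Q P \<longrightarrow>
            (A_obj L \<gamma> k w Q P = A_obj L \<gamma> k w Q Popt \<longleftrightarrow> P = Popt))"
proof -
  interpret sigma_finite_measure L by fact
  define v where "v = dens L Popt"
  define S where "S = (\<lambda>y. \<Sum>j\<in>{1..k}. w j * dens L (Q j) y powr \<gamma>)"
  have poptm[measurable]: "popt \<in> borel_measurable L" using popt_int by auto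
  have vm[measurable]: "v \<in> borel_measurable L" unfolding v_def dens_def by measurable
  have qm[measurable]: "dens L (Q j) \<in> borel_measurable L" for j unfolding dens_def by measurable
  have Sm[measurable]: "S \<in> borel_measurable L" unfolding S_def by measurable
  have S0: "S y \<ge> 0" for y unfolding S_def
  proof (rule sum_nonneg)
    fix j assume "j \<in> {1..k}"
    then have "w j > 0" by (rule w)
    then show "0 \<le> w j * dens L (Q j) y powr \<gamma>" by simp
  qed
  have popt0: "popt y \<ge> 0" for y using z by (simp add: popt_def)
  have macPopt: "mac_prob L Popt" using Popt_adm by (simp add: admissible_def)
  note vf = mac_facts[OF sf macPopt, folded v_def]
  have "AE y in L. ennreal (popt y) = RN_deriv L Popt y"
    by (rule RN_deriv_unique) (auto simp: Popt_def)
  then have vpopt: "AE y in L. v y = popt y"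
  proof eventually_elim
    case (elim y)
    then have "v y = enn2real (ennreal (popt y))" by (simp add: v_def dens_def)
    then show ?case using popt0[of y] by simp
  qed
  have vS: "AE y in L. v y powr \<gamma> = z powr \<gamma> * S y"
    using vpopt
  proof eventually_elim
    case (elim y)
    have "popt y powr \<gamma> = z powr \<gamma> * (S y powr (1 / \<gamma>)) powr \<gamma>"
      using z S0[of y] by (simp add: popt_def S_def powr_mult)
    also have "\<dots> = z powr \<gamma> * S y"
      using S0[of y] g0 by (cases "S y = 0") (auto simp: powr_powr)
    finally show ?case using elim by simp
  qed
  define C where "C = (\<Sum>j\<in>{1..k}. w j * ((1 / \<gamma>) * (\<integral>y. dens L (Q j) y powr (\<gamma> + 1) \<partial>L) powr (\<gamma> / (\<gamma> + 1))))"
  have gen: "integrable L (\<lambda>y. dens L P y * v y powr \<gamma>) \<and>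
     A_obj L \<gamma> k w Q P = C - (1 / (\<gamma> * z powr \<gamma>)) * (\<integral>y. dens L P y * v y powr \<gamma> \<partial>L)
        / (\<integral>y. dens L P y powr (\<gamma> + 1) \<partial>L) powr (1 / (\<gamma> + 1))"
    if adm: "admissible L \<gamma> k Q P" for P
  proof -
    define p where "p = dens L P"
    have pm[measurable]: "p \<in> borel_measurable L" unfolding p_def dens_def by measurable
    have ipq: "integrable L (\<lambda>y. p y * dens L (Q j) y powr \<gamma>)" if "j \<in> {1..k}" for j
      using adm that by (simp add: admissible_def p_def)
    have iS: "integrable L (\<lambda>y. z powr \<gamma> * (\<Sum>j\<in>{1..k}. w j * (p y * dens L (Q j) y powr \<gamma>)))"
      using ipq by (intro integrable_mult_right integrable_sum) auto
    have AEeq: "AE y in L. z powr \<gamma> * (\<Sum>j\<in>{1..k}. w j * (p y * dens L (Q j) y powr \<gamma>))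
                 = p y * v y powr \<gamma>"
      using vS by eventually_elim (simp add: S_def sum_distrib_left algebra_simps)
    have ipv: "integrable L (\<lambda>y. p y * v y powr \<gamma>)"
      by (rule integrable_cong_AE_imp[OF iS _ AEeq]) measurable
    have "(\<integral>y. p y * v y powr \<gamma> \<partial>L)
        = (\<integral>y. z powr \<gamma> * (\<Sum>j\<in>{1..k}. w j * (p y * dens L (Q j) y powr \<gamma>)) \<partial>L)"
      by (rule integral_cong_AE) (use AEeq in \<open>auto elim: AE_mp\<close>)
    also have "\<dots> = z powr \<gamma> * (\<Sum>j\<in>{1..k}. w j * (\<integral>y. p y * dens L (Q j) y powr \<gamma> \<partial>L))"
      using ipq by (simp add: integral_sum)
    finally have J: "(\<integral>y. p y * v y powr \<gamma> \<partial>L)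
        = z powr \<gamma> * (\<Sum>j\<in>{1..k}. w j * (\<integral>y. p y * dens L (Q j) y powr \<gamma> \<partial>L))" .
    define Np where "Np = (\<integral>y. p y powr (\<gamma> + 1) \<partial>L) powr (1 / (\<gamma> + 1))"
    have "A_obj L \<gamma> k w Q P = (\<Sum>j\<in>{1..k}. (- (1 / \<gamma>) / Np) * (w j * (\<integral>y. p y * dens L (Q j) y powr \<gamma> \<partial>L))
        + w j * ((1 / \<gamma>) * (\<integral>y. dens L (Q j) y powr (\<gamma> + 1) \<partial>L) powr (\<gamma> / (\<gamma> + 1))))"
      unfolding A_obj_def dual_gamma_div_def p_def[symmetric] Np_def[symmetric]
      by (intro sum.cong refl) (simp add: algebra_simps)
    also have "\<dots> = (- (1 / \<gamma>) / Np) * (\<Sum>j\<in>{1..k}. w j * (\<integral>y. p y * dens L (Q j) y powr \<gamma> \<partial>L)) + C"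
      unfolding C_def by (simp only: sum.distrib sum_distrib_left)
    also have "\<dots> = C - (1 / (\<gamma> * z powr \<gamma>)) * (\<integral>y. p y * v y powr \<gamma> \<partial>L) / Np"
      unfolding J using z by (simp add: field_simps)
    finally show ?thesis using ipv unfolding p_def Np_def by simp
  qed
  have ivr: "integrable L (\<lambda>y. v y powr (\<gamma> + 1))"
    using Popt_adm by (simp add: admissible_def v_def)
  have vv: "v y * v y powr \<gamma> = v y powr (\<gamma> + 1)" for y
    using powr_mult_base[of "v y" \<gamma>] by (simp add: v_def dens_def add.commute)
  define Iv where "Iv = (\<integral>y. v y powr (\<gamma> + 1) \<partial>L)"
  define Nv where "Nv = Iv powr (1 / (\<gamma> + 1))"
  define c where "c = 1 / (\<gamma> * z powr \<gamma>)"
  have c0: "c \<noteq> 0" using g0 z by (simp add: c_def)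
  have AP: "A_obj L \<gamma> k w Q Popt = C - c * Iv / Nv"
    using gen[OF Popt_adm] unfolding v_def[symmetric] vv by (simp add: Iv_def Nv_def c_def)
  have Ivpos: "Iv > 0" unfolding Iv_def
  proof (rule int_pos[OF ivr _ vf(3) vf(5)])
    show "AE y in L. 0 < v y powr (\<gamma> + 1)" using vf(2) by eventually_elim simp
  qed
  have main: "c * ((\<integral>y. dens L P y * v y powr \<gamma> \<partial>L) / (\<integral>y. dens L P y powr (\<gamma> + 1) \<partial>L) powr (1 / (\<gamma> + 1))
         - Iv / Nv) \<le> 0 \<and>
        (c * ((\<integral>y. dens L P y * v y powr \<gamma> \<partial>L) / (\<integral>y. dens L P y powr (\<gamma> + 1) \<partial>L) powr (1 / (\<gamma> + 1))
         - Iv / Nv) = 0 \<longrightarrow> P = Popt)"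
    if adm: "admissible L \<gamma> k Q P" for P
  proof -
    define p where "p = dens L P"
    have macP: "mac_prob L P" using adm by (simp add: admissible_def)
    note pf = mac_facts[OF sf macP, folded p_def]
    have ipr: "integrable L (\<lambda>y. p y powr (\<gamma> + 1))" using adm by (simp add: admissible_def p_def)
    have ipv: "integrable L (\<lambda>y. p y * v y powr \<gamma>)" using gen[OF adm] by (simp add: p_def)
    have Ippos: "(\<integral>y. p y powr (\<gamma> + 1) \<partial>L) > 0"
    proof (rule int_pos[OF ipr _ pf(3) pf(5)])
      show "AE y in L. 0 < p y powr (\<gamma> + 1)" using pf(2) by eventually_elim simp
    qed
    note cr = core[OF g0 g1 pf(3) vf(3) pf(2) vf(2) ipr ivr ipv Ippos Ivpos[unfolded Iv_def],
       folded Iv_def Nv_def]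
    define X where "X = (\<integral>y. p y * v y powr \<gamma> \<partial>L) / (\<integral>y. p y powr (\<gamma> + 1) \<partial>L) powr (1 / (\<gamma> + 1)) - Iv / Nv"
    have cX: "c * X = (\<gamma> * X) / (\<gamma> * \<gamma> * z powr \<gamma>)"
      using g0 z by (simp add: c_def field_simps)
    have den: "\<gamma> * \<gamma> * z powr \<gamma> > 0"
    proof -
      have "\<gamma> * \<gamma> > 0" using g0 not_real_square_gt_zero by blast
      moreover have "z powr \<gamma> > 0" using z by simp
      ultimately show ?thesis by (rule mult_pos_pos)
    qed
    have le: "\<gamma> * X \<le> 0" using cr(1) by (simp add: X_def)
    have "c * X \<le> 0" unfolding cX using le den by (rule divide_nonpos_pos)
    moreover have "c * X = 0 \<longrightarrow> P = Popt"
    proof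
      assume "c * X = 0"
      then have "\<gamma> * X = 0" using c0 by simp
      then have ae: "AE y in L. p y = ((\<integral>y. p y powr (\<gamma> + 1) \<partial>L) powr (1 / (\<gamma> + 1)) / Nv) * v y"
        using cr(2) by (simp add: X_def)
      define a where "a = (\<integral>y. p y powr (\<gamma> + 1) \<partial>L) powr (1 / (\<gamma> + 1)) / Nv"
      have "(\<integral>y. p y \<partial>L) = (\<integral>y. a * v y \<partial>L)"
        by (rule integral_cong_AE) (use ae pf(3) in \<open>auto simp: a_def\<close>)
      then have "a = 1" using pf(5) vf(5) by simp
      then have ae1: "AE y in L. p y = v y" using ae unfolding a_def[symmetric] by simp
      have "P = density L (\<lambda>y. ennreal (p y))" by (rule pf(1))
      also have "\<dots> = density L (\<lambda>y. ennreal (v y))"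
        by (rule density_cong) (use ae1 pf(3) in \<open>auto elim: AE_mp\<close>)
      also have "\<dots> = Popt" by (rule vf(1)[symmetric])
      finally show "P = Popt" .
    qed
    ultimately have fin: "c * X \<le> 0 \<and> (c * X = 0 \<longrightarrow> P = Popt)" by blast
    show ?thesis using fin[unfolded X_def p_def] .
  qed
  show ?thesis
  proof (intro conjI allI impI)
    fix P assume adm: "admissible L \<gamma> k Q P"
    have "A_obj L \<gamma> k w Q P - A_obj L \<gamma> k w Q Popt
       = - (c * ((\<integral>y. dens L P y * v y powr \<gamma> \<partial>L) / (\<integral>y. dens L P y powr (\<gamma> + 1) \<partial>L) powr (1 / (\<gamma> + 1))
         - Iv / Nv))"
      using gen[OF adm] AP by (simp add: c_def algebra_simps)
    then show "A_obj L \<gamma> k w Q P \<ge> A_obj L \<gamma> k w Q Popt" using main[OF adm] by linarith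
  next
    fix P assume adm: "admissible L \<gamma> k Q P"
    have "A_obj L \<gamma> k w Q P - A_obj L \<gamma> k w Q Popt
       = - (c * ((\<integral>y. dens L P y * v y powr \<gamma> \<partial>L) / (\<integral>y. dens L P y powr (\<gamma> + 1) \<partial>L) powr (1 / (\<gamma> + 1))
         - Iv / Nv))"
      using gen[OF adm] AP by (simp add: c_def algebra_simps)
    then show "A_obj L \<gamma> k w Q P = A_obj L \<gamma> k w Q Popt \<longleftrightarrow> P = Popt"
    proof -
      assume d: "A_obj L \<gamma> k w Q P - A_obj L \<gamma> k w Q Popt
       = - (c * ((\<integral>y. dens L P y * v y powr \<gamma> \<partial>L) / (\<integral>y. dens L P y powr (\<gamma> + 1) \<partial>L) powr (1 / (\<gamma> + 1))
         - Iv / Nv))"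
      show ?thesis
      proof
        assume "A_obj L \<gamma> k w Q P = A_obj L \<gamma> k w Q Popt"
        then have "c * ((\<integral>y. dens L P y * v y powr \<gamma> \<partial>L) / (\<integral>y. dens L P y powr (\<gamma> + 1) \<partial>L) powr (1 / (\<gamma> + 1))
         - Iv / Nv) = 0" using d by linarith
        then show "P = Popt" using main[OF adm] by blast
      qed simp
    qed
  qed
qed

end
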